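(* Let $W$ be a real 2-dimensional vector space, $m\ge2$, and let $\varphi:S^mW^*\hookrightarrow(W^* )^{\otimes m}$ be the Veronese factorization structure, with (common) factorization curve $\psi:\mathbb{P}(W)\to\mathbb{P}(S^mW^* )$, $\psi(\ell)=(\ell^0)^{\otimes m}$. Let $\sigma^\vee\subset S^mW^*$ be a full-dimensional pointed convex polyhedral cone each of whose extremal rays lies on a line $\psi(t)$ for some $t\in\mathbb{P}(W)$. Then $\sigma^\vee$ is a cone over a simplicial polytope: every facet of $\sigma^\vee$ contains exactly $m$ extremal rays, and these are linearly independent.
   Context: $S^mW^*\subset(W^* )^{\otimes m}$ is the subspace of symmetric tensors (of dimension $m+1$); $\ell^0\subset W^*$ denotes the annihilator of a line $\ell\subset W$, and $(\ell^0)^{\otimes m}$ is the line spanned by $\alpha\otimes\cdots\otimes\alpha$ for $0\ne\alpha\in\ell^0$ (its image is the rational normal curve of degree $m$). A convex polyhedral cone is the set of nonnegative combinations of finitely many vectors; it is pointed if it contains no nontrivial linear subspace; an extremal ray is a 1-dimensional face, a facet a codimension-one face. *)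

theory Defs
  imports "HOL-Analysis.Analysis"
begin

text \<open>Coordinates: W = R^2 with dual basis e1*, e2* of W*.  A symmetric tensor
T in S^m W* has components T_{i1...im} depending only on how many indices equal 2;
the map T |-> (T_{1..1 2..2 (k twos)})_{k=0..m} is a linear isomorphism
S^m W* = R^(m+1).  We index the m+1 coordinates by a finite type 'n via a
bijection idx : 'n -> {0..m}.  For alpha = p e1* + q e2* (spanning l^0, where l
is the line spanned by (q,-p)), the tensor alpha^{(x)m} has coordinates
p^(m-k) q^k.\<close>

definition veronese_pt :: "('n \<Rightarrow> nat) \<Rightarrow> nat \<Rightarrow> real \<Rightarrow> real \<Rightarrow> real ^ 'n" where
  "veronese_pt idx m p q = (\<chi> i. p ^ (m - idx i) * q ^ (idx i))"

definition veronese_line :: "('n \<Rightarrow> nat) \<Rightarrow> nat \<Rightarrow> real \<Rightarrow> real \<Rightarrow> (real ^ 'n) set" where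
  "veronese_line idx m p q = span {veronese_pt idx m p q}"

definition polyhedral_cone :: "'a::real_vector set \<Rightarrow> bool" where
  "polyhedral_cone C \<longleftrightarrow>
     (\<exists>S. finite S \<and> C = {\<Sum>v\<in>S. c v *\<^sub>R v | c. \<forall>v\<in>S. c v \<ge> 0})"

definition pointed_cone :: "'a::real_vector set \<Rightarrow> bool" where
  "pointed_cone C \<longleftrightarrow> (\<forall>L. subspace L \<and> L \<subseteq> C \<longrightarrow> L = {0})"

definition extremal_ray :: "'a::euclidean_space set \<Rightarrow> 'a set \<Rightarrow> bool" where
  "extremal_ray C R \<longleftrightarrow> R face_of C \<and> aff_dim R = 1"

definition facet :: "'a::euclidean_space set \<Rightarrow> 'a set \<Rightarrow> bool" where
  "facet C F \<longleftrightarrow> F face_of C \<and> aff_dim F = aff_dim C - 1"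

definition ray :: "'a::real_vector \<Rightarrow> 'a set" where
  "ray v = {c *\<^sub>R v | c. c \<ge> 0}"

end

theory Submission
  imports Defs
begin

lemma key_points:
  fixes P :: "(real \<times> real) set"
  assumes "finite P" "card P \<le> Suc m" "\<forall>x\<in>P. x \<noteq> (0,0)"
    "\<forall>x\<in>P. \<forall>y\<in>P. x \<noteq> y \<longrightarrow> fst x * snd y - snd x * fst y \<noteq> 0"
    "\<forall>i\<le>m. (\<Sum>x\<in>P. c x * fst x ^ (m - i) * snd x ^ i) = 0"
  shows "\<forall>x\<in>P. c x = 0"
  using assms
proof (induction m arbitrary: P c)
  case 0
  then have "card P \<le> 1" by simp
  with \<open>finite P\<close> have "P = {} \<or> (\<exists>x. P = {x})"
    by (metis One_nat_def card_0_eq card_1_singletonE le_SucE le_zero_eq)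
  then show ?case using "0.prems"(5) by auto
next
  case (Suc m)
  show ?case
  proof (cases "P = {}")
    case True then show ?thesis by simp
  next
    case False
    then obtain a where aP: "a \<in> P" by blast
    obtain a1 a2 where a: "a = (a1, a2)" by (cases a)
    define P' where "P' = P - {a}"
    have fP': "finite P'" using Suc.prems(1) by (simp add: P'_def)
    have cP': "card P' \<le> Suc m" using Suc.prems(2) aP Suc.prems(1) by (simp add: P'_def)
    define c' where "c' x = c x * (a2 * fst x - a1 * snd x)" for x
    have PP: "P = insert a P'" "a \<notin> P'" using aP by (auto simp: P'_def)
    have eq: "(\<Sum>x\<in>P'. c' x * fst x ^ (m - i) * snd x ^ i) = 0" if "i \<le> m" for i
    proof -
      have "(\<Sum>x\<in>P'. c' x * fst x ^ (m - i) * snd x ^ i)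
          = (\<Sum>x\<in>P. c' x * fst x ^ (m - i) * snd x ^ i)"
        using PP fP' by (simp add: c'_def a)
      also have "\<dots> = (\<Sum>x\<in>P. a2 * (c x * fst x ^ (Suc m - i) * snd x ^ i)
                             - a1 * (c x * fst x ^ (Suc m - Suc i) * snd x ^ Suc i))"
      proof (rule sum.cong[OF refl])
        fix x assume "x \<in> P"
        have "Suc m - i = Suc (m - i)" using that by simp
        then show "c' x * fst x ^ (m - i) * snd x ^ i =
             a2 * (c x * fst x ^ (Suc m - i) * snd x ^ i) - a1 * (c x * fst x ^ (Suc m - Suc i) * snd x ^ Suc i)"
          by (simp add: c'_def algebra_simps)
      qed
      also have "\<dots> = a2 * (\<Sum>x\<in>P. c x * fst x ^ (Suc m - i) * snd x ^ i)
                     - a1 * (\<Sum>x\<in>P. c x * fst x ^ (Suc m - Suc i) * snd x ^ Suc i)"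
        by (simp add: sum_subtractf sum_distrib_left)
      also have "\<dots> = 0"
        using Suc.prems(5)[rule_format, of i] Suc.prems(5)[rule_format, of "Suc i"] that
        by (simp del: diff_Suc_Suc power_Suc)
      finally show ?thesis .
    qed
    have "\<forall>x\<in>P'. c' x = 0"
      apply (rule Suc.IH[OF fP' cP' _ _ ])
      using Suc.prems(3,4) eq by (auto simp: P'_def)
    moreover have "a2 * fst x - a1 * snd x \<noteq> 0" if "x \<in> P'" for x
    proof -
      have "x \<in> P" "x \<noteq> a" using that by (auto simp: P'_def)
      then have "fst x * snd a - snd x * fst a \<noteq> 0" using Suc.prems(4) aP by blast
      then show ?thesis by (simp add: a algebra_simps)
    qed
    ultimately have z: "\<forall>x\<in>P'. c x = 0" by (simp add: c'_def)
    have "(\<Sum>x\<in>P. c x * fst x ^ (Suc m - i) * snd x ^ i) = c a * a1 ^ (Suc m - i) * a2 ^ i" for i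
      using PP fP' z by (simp add: a)
    note sa = this
    have e0: "c a * a1 ^ Suc m = 0"
      using Suc.prems(5)[rule_format, of 0] sa[of 0] by (simp del: power_Suc)
    have e1: "c a * a2 ^ Suc m = 0"
      using Suc.prems(5)[rule_format, of "Suc m"] sa[of "Suc m"] by (simp del: power_Suc)
    have "c a = 0" using e0 e1 Suc.prems(3) aP a by auto
    then show ?thesis using z PP by auto
  qed
qed



definition coneof :: "'a::real_vector set \<Rightarrow> 'a set" where
  "coneof S = {\<Sum>v\<in>S. c v *\<^sub>R v | c. \<forall>v\<in>S. c v \<ge> 0}"

lemma coneof_0: "0 \<in> coneof S"
  unfolding coneof_def by (rule CollectI, rule exI[of _ "\<lambda>_. 0"]) simp

lemma coneof_scale: assumes "x \<in> coneof S" "a \<ge> 0" shows "a *\<^sub>R x \<in> coneof S"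
proof -
  obtain c where c: "\<forall>v\<in>S. c v \<ge> 0" "x = (\<Sum>v\<in>S. c v *\<^sub>R v)" using assms(1) unfolding coneof_def by blast
  have "a *\<^sub>R x = (\<Sum>v\<in>S. (a * c v) *\<^sub>R v)" by (simp add: c scaleR_sum_right)
  moreover have "\<forall>v\<in>S. a * c v \<ge> 0" using c assms by simp
  ultimately show ?thesis unfolding coneof_def by (auto intro!: exI[of _ "\<lambda>v. a * c v"])
qed

lemma coneof_sub: assumes "finite S" "T \<subseteq> S" shows "coneof T \<subseteq> coneof S"
proof
  fix x assume "x \<in> coneof T"
  then obtain c where c: "\<forall>v\<in>T. c v \<ge> 0" "x = (\<Sum>v\<in>T. c v *\<^sub>R v)" unfolding coneof_def by blast
  define c' where "c' v = (if v \<in> T then c v else 0)" for v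
  have "(\<Sum>v\<in>S. c' v *\<^sub>R v) = (\<Sum>v\<in>T. c' v *\<^sub>R v)"
    by (rule sum.mono_neutral_right) (use assms in \<open>auto simp: c'_def\<close>)
  also have "\<dots> = x" by (simp add: c c'_def)
  finally show "x \<in> coneof S" unfolding coneof_def using c(1)
    by (intro CollectI exI[of _ c']) (auto simp: c'_def)
qed

lemma coneof_base: assumes "finite S" "v \<in> S" shows "v \<in> coneof S"
proof -
  have e: "(\<lambda>w. (if w = v then 1 else 0) *\<^sub>R w) = (\<lambda>w. if w = v then w else 0)" by auto
  have "(\<Sum>w\<in>S. (if w = v then 1 else 0) *\<^sub>R w) = v"
    unfolding e using assms by simp
  then show ?thesis unfolding coneof_def
    by (intro CollectI exI[of _ "\<lambda>w. if w = v then 1 else 0"]) auto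
qed

lemma coneof_span: "coneof S \<subseteq> span S"
  unfolding coneof_def
  apply clarify
  apply (rule span_sum)
  apply (rule span_scale)
  apply (rule span_base)
  apply simp
  done

lemma coneof_remove:
  assumes "finite S" "v \<in> S" "v \<in> coneof (S - {v})"
  shows "coneof (S - {v}) = coneof S"
proof
  show "coneof (S - {v}) \<subseteq> coneof S" using assms by (intro coneof_sub) auto
  show "coneof S \<subseteq> coneof (S - {v})"
  proof
    fix x assume "x \<in> coneof S"
    then obtain c where c: "\<forall>w\<in>S. c w \<ge> 0" "x = (\<Sum>w\<in>S. c w *\<^sub>R w)" unfolding coneof_def by blast
    obtain d where d: "\<forall>w\<in>S-{v}. d w \<ge> 0" "v = (\<Sum>w\<in>S-{v}. d w *\<^sub>R w)"
      using assms(3) unfolding coneof_def by blast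
    have "x = c v *\<^sub>R v + (\<Sum>w\<in>S-{v}. c w *\<^sub>R w)" using c(2) assms by (simp add: sum.remove)
    also have "\<dots> = (\<Sum>w\<in>S-{v}. (c v * d w + c w) *\<^sub>R w)"
      by (subst d(2)) (simp add: scaleR_sum_right scaleR_add_left sum.distrib)
    finally show "x \<in> coneof (S - {v})" unfolding coneof_def using c(1) d(1) assms(2)
      by (intro CollectI exI[of _ "\<lambda>w. c v * d w + c w"]) auto
  qed
qed

locale mincone =
  fixes S0 :: "'a::euclidean_space set" and \<sigma> :: "'a set"
  assumes fin: "finite S0" and sig: "\<sigma> = coneof S0"
    and minim: "\<And>v. v \<in> S0 \<Longrightarrow> v \<notin> coneof (S0 - {v})"
    and point: "\<And>x. x \<in> \<sigma> \<Longrightarrow> - x \<in> \<sigma> \<Longrightarrow> x = 0"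
begin

lemma nz: "v \<in> S0 \<Longrightarrow> v \<noteq> 0"
  using minim coneof_0 by metis

lemma zero_comb:
  assumes "\<forall>w\<in>S0. d w \<ge> 0" "(\<Sum>w\<in>S0. d w *\<^sub>R w) = 0" "w \<in> S0"
  shows "d w = 0"
proof -
  have A: "d w *\<^sub>R w \<in> \<sigma>" using assms fin by (simp add: sig coneof_scale coneof_base)
  have "- (d w *\<^sub>R w) = (\<Sum>v\<in>S0-{w}. d v *\<^sub>R v)"
    using assms(2,3) fin by (simp add: sum.remove neg_eq_iff_add_eq_0)
  moreover have "(\<Sum>v\<in>S0-{w}. d v *\<^sub>R v) \<in> coneof (S0 - {w})"
    unfolding coneof_def using assms(1) by auto
  ultimately have "- (d w *\<^sub>R w) \<in> \<sigma>" using coneof_sub[OF fin, of "S0-{w}"]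
    unfolding sig by auto
  then have "d w *\<^sub>R w = 0" using point A by blast
  then show ?thesis using nz assms(3) by simp
qed

lemma face_scale:
  assumes F: "F face_of \<sigma>" and y: "y \<in> F" and s: "s \<ge> 0"
  shows "s *\<^sub>R y \<in> F"
proof (cases "y = 0")
  case True then show ?thesis using y by simp
next
  case False
  have yS: "y \<in> \<sigma>" using F y face_of_imp_subset by blast
  have z: "0 \<in> \<sigma>" by (simp add: sig coneof_0)
  have "y \<in> open_segment 0 (2 *\<^sub>R y)"
    unfolding in_segment using False by (intro conjI exI[of _ "1/2"]) auto
  then have z0: "0 \<in> F" using face_ofD[OF F _ z _ y] yS sig coneof_scale[of y S0 2] by auto
  show ?thesis
  proof (cases "s \<le> 1")
    case True
    have "convex F" using F face_of_imp_convex by blast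
    then have "(1 - s) *\<^sub>R 0 + s *\<^sub>R y \<in> F" using z0 y s True by (intro convexD) auto
    then show ?thesis by simp
  next
    case False
    have "y \<in> open_segment 0 (s *\<^sub>R y)"
      unfolding in_segment using False \<open>y \<noteq> 0\<close> by (intro conjI exI[of _ "1/s"]) auto
    then show ?thesis using face_ofD[OF F _ z _ y] yS sig coneof_scale[of y S0 s] s by auto
  qed
qed

lemma face_zero: "F face_of \<sigma> \<Longrightarrow> F \<noteq> {} \<Longrightarrow> 0 \<in> F"
  using face_scale[of F _ 0] by auto

lemma face_gen:
  assumes F: "F face_of \<sigma>" and x: "x \<in> F"
  shows "x \<in> coneof (S0 \<inter> F)"
proof -
  have "x \<in> \<sigma>" using F x face_of_imp_subset by blast
  then obtain c where c: "\<forall>w\<in>S0. c w \<ge> 0" "x = (\<Sum>w\<in>S0. c w *\<^sub>R w)" unfolding sig coneof_def by blast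
  have inF: "v \<in> F" if v: "v \<in> S0" "c v > 0" for v
  proof -
    define r where "r = (\<Sum>w\<in>S0-{v}. c w *\<^sub>R w)"
    have r: "r \<in> \<sigma>" using coneof_sub[OF fin, of "S0-{v}"] c(1) unfolding sig coneof_def r_def by auto
    have xr: "x = c v *\<^sub>R v + r" using c(2) v fin by (simp add: sum.remove r_def)
    define a where "a = (2 * c v) *\<^sub>R v"
    define b where "b = 2 *\<^sub>R r"
    have aS: "a \<in> \<sigma>" using v fin unfolding a_def sig by (intro coneof_scale coneof_base) auto
    have bS: "b \<in> \<sigma>" using r unfolding b_def sig by (intro coneof_scale) auto
    have mid: "x = midpoint a b" unfolding midpoint_def a_def b_def xr by (simp add: scaleR_add_right)
    have "a \<in> F"
    proof (cases "a = b")
      case True then show ?thesis using mid x by (simp add: midpoint_def)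
    next
      case False
      then have "x \<in> open_segment a b" using mid by simp
      then show ?thesis using face_ofD[OF F _ aS bS x] by blast
    qed
    then have "(1 / (2 * c v)) *\<^sub>R a \<in> F" using face_scale[OF F] v by simp
    then show ?thesis using v by (simp add: a_def)
  qed
  have "x = (\<Sum>w\<in>S0 \<inter> F. c w *\<^sub>R w)"
    unfolding c(2) by (rule sum.mono_neutral_right) (use fin inF c(1) in \<open>auto simp: less_eq_real_def\<close>)
  then show ?thesis unfolding coneof_def using c(1) by auto
qed

lemma ray_in: "v \<in> ray v" unfolding ray_def by (auto intro!: exI[of _ 1])
lemma ray_zero: "0 \<in> ray v" unfolding ray_def by (auto intro!: exI[of _ 0])

lemma span_ray: "span (ray v) = span {v}"
proof -
  have "ray v \<subseteq> span {v}" unfolding ray_def by (auto intro: span_scale span_base)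
  moreover have "{v} \<subseteq> span (ray v)" using ray_in by (auto intro: span_base)
  ultimately show ?thesis by (simp add: span_eq)
qed

lemma aff_dim_ray: assumes "v \<noteq> 0" shows "aff_dim (ray v) = 1"
proof -
  have "0 \<in> affine hull (ray v)" by (rule hull_inc) (rule ray_zero)
  then have "aff_dim (ray v) = int (dim (ray v))" using aff_dim_eq_dim[of 0 "ray v"] by simp
  also have "dim (ray v) = dim (span (ray v))" by simp
  also have "\<dots> = 1" using assms by (simp add: span_ray)
  finally show ?thesis by simp
qed

lemma convex_ray: "convex (ray v)"
  unfolding convex_def ray_def
proof (clarify)
  fix u w :: real and c d :: real
  assume "0 \<le> u" "0 \<le> w" "u + w = 1" "0 \<le> c" "0 \<le> d"
  then show "\<exists>e. u *\<^sub>R c *\<^sub>R v + w *\<^sub>R d *\<^sub>R v = e *\<^sub>R v \<and> 0 \<le> e"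
    by (intro exI[of _ "u*c + w*d"]) (simp add: scaleR_add_left)
qed

lemma ray_face: assumes v: "v \<in> S0" shows "ray v face_of \<sigma>"
proof -
  have sub: "ray v \<subseteq> \<sigma>" unfolding ray_def sig using coneof_scale coneof_base[OF fin v] by auto
  have key: "a \<in> ray v" if a: "a \<in> \<sigma>" and b: "b \<in> \<sigma>" and x: "x \<in> ray v" and
     u: "0 < u" "u < 1" "x = (1 - u) *\<^sub>R a + u *\<^sub>R b" for a b x u
  proof -
    obtain \<alpha> where \<alpha>: "\<forall>w\<in>S0. \<alpha> w \<ge> 0" "a = (\<Sum>w\<in>S0. \<alpha> w *\<^sub>R w)" using a unfolding sig coneof_def by blast
    obtain \<beta> where \<beta>: "\<forall>w\<in>S0. \<beta> w \<ge> 0" "b = (\<Sum>w\<in>S0. \<beta> w *\<^sub>R w)" using b unfolding sig coneof_def by blast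
    obtain t where t: "t \<ge> 0" "x = t *\<^sub>R v" using x unfolding ray_def by blast
    define d where "d w = (1 - u) * \<alpha> w + u * \<beta> w" for w
    have dnn: "\<forall>w\<in>S0. d w \<ge> 0" using \<alpha>(1) \<beta>(1) u by (simp add: d_def)
    have xd: "x = (\<Sum>w\<in>S0. d w *\<^sub>R w)"
      unfolding u(3) \<alpha>(2) \<beta>(2) d_def by (simp add: scaleR_sum_right scaleR_add_left sum.distrib)
    have xs: "x = d v *\<^sub>R v + (\<Sum>w\<in>S0-{v}. d w *\<^sub>R w)" using xd v fin by (simp add: sum.remove)
    have "\<not> t > d v"
    proof
      assume tl: "t > d v"
      have "(t - d v) *\<^sub>R v = (\<Sum>w\<in>S0-{v}. d w *\<^sub>R w)"
        using xs t(2) by (simp add: algebra_simps)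
      moreover have "(1 / (t - d v)) *\<^sub>R ((t - d v) *\<^sub>R v) = v" using tl by simp
      ultimately have "v = (1 / (t - d v)) *\<^sub>R (\<Sum>w\<in>S0-{v}. d w *\<^sub>R w)" by simp
      also have "\<dots> = (\<Sum>w\<in>S0-{v}. (d w / (t - d v)) *\<^sub>R w)" by (simp add: scaleR_sum_right)
      finally have "v \<in> coneof (S0 - {v})" unfolding coneof_def using dnn tl by auto
      then show False using minim v by blast
    qed
    then have tle: "t \<le> d v" by simp
    define d' where "d' w = (if w = v then d v - t else d w)" for w
    have "(\<Sum>w\<in>S0. d' w *\<^sub>R w) = (d v - t) *\<^sub>R v + (\<Sum>w\<in>S0-{v}. d w *\<^sub>R w)"
      using v fin by (simp add: sum.remove d'_def)
    also have "\<dots> = 0" using xs t(2) by (simp add: algebra_simps)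
    finally have dz: "\<forall>w\<in>S0. d' w = 0" using zero_comb[of d'] dnn tle by (auto simp: d'_def)
    have "\<forall>w\<in>S0-{v}. d w = 0"
    proof
      fix w assume "w \<in> S0-{v}"
      then show "d w = 0" using dz[rule_format, of w] by (simp add: d'_def)
    qed
    then have "\<forall>w\<in>S0-{v}. \<alpha> w = 0" using \<alpha>(1) \<beta>(1) u unfolding d_def
      by (metis Diff_iff add_nonneg_eq_0_iff diff_gt_0_iff_gt mult_eq_0_iff mult_nonneg_nonneg less_imp_le not_less_iff_gr_or_eq)
    then have "a = \<alpha> v *\<^sub>R v" using \<alpha>(2) v fin by (simp add: sum.remove)
    then show ?thesis using \<alpha>(1) v unfolding ray_def by auto
  qed
  have ab: "\<forall>a\<in>\<sigma>. \<forall>b\<in>\<sigma>. \<forall>x\<in>ray v. x \<in> open_segment a b \<longrightarrow> a \<in> ray v \<and> b \<in> ray v"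
  proof (intro ballI impI)
    fix a b x assume a: "a \<in> \<sigma>" and b: "b \<in> \<sigma>" and x: "x \<in> ray v" and xo: "x \<in> open_segment a b"
    then obtain u where u: "0 < u" "u < 1" "x = (1 - u) *\<^sub>R a + u *\<^sub>R b" unfolding in_segment by blast
    have "a \<in> ray v" using key[OF a b x u] .
    moreover have "b \<in> ray v" using key[OF b a x, of "1 - u"] u by (simp add: algebra_simps)
    ultimately show "a \<in> ray v \<and> b \<in> ray v" by blast
  qed
  show ?thesis unfolding face_of_def using sub convex_ray ab by blast
qed

lemma ray_extremal: "v \<in> S0 \<Longrightarrow> extremal_ray \<sigma> (ray v)"
  unfolding extremal_ray_def using ray_face aff_dim_ray nz by blast

lemma extremal_is_ray:
  assumes "extremal_ray \<sigma> R" shows "\<exists>v\<in>S0. R = ray v"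
proof -
  have F: "R face_of \<sigma>" and ad: "aff_dim R = 1" using assms unfolding extremal_ray_def by auto
  have "\<not> R \<subseteq> {0}"
  proof
    assume "R \<subseteq> {0}" then have "aff_dim R \<le> aff_dim {0::'a}" by (rule aff_dim_subset)
    then show False using ad by simp
  qed
  then obtain x where x: "x \<in> R" "x \<noteq> 0" by blast
  have R0: "0 \<in> R" using face_zero[OF F] x by blast
  have "x \<in> coneof (S0 \<inter> R)" using face_gen[OF F x(1)] .
  then obtain c where "x = (\<Sum>w\<in>S0 \<inter> R. c w *\<^sub>R w)" unfolding coneof_def by blast
  then have "S0 \<inter> R \<noteq> {}" using x(2) by auto
  then obtain v where v: "v \<in> S0" "v \<in> R" by blast
  have "0 \<in> affine hull R" by (rule hull_inc) (rule R0)
  then have dR: "dim R = 1" using aff_dim_eq_dim[of 0 R] ad by simp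
  have "R = ray v"
  proof
    show "ray v \<subseteq> R" unfolding ray_def using face_scale[OF F v(2)] by auto
    show "R \<subseteq> ray v"
    proof
      fix y assume y: "y \<in> R"
      have "y \<in> span {v}"
      proof (rule ccontr)
        assume ny: "y \<notin> span {v}"
        have "independent {y, v}" using ny nz[OF v(1)] by (simp add: independent_insert)
        then have "card {y, v} \<le> dim R" using y v by (intro independent_card_le_dim) auto
        moreover have "y \<noteq> v" using ny span_base[of v "{v}"] by auto
        ultimately show False using dR by simp
      qed
      then obtain k where k: "y = k *\<^sub>R v" by (auto simp: span_singleton)
      have yS: "y \<in> \<sigma>" using y F face_of_imp_subset by blast
      have "k \<ge> 0"
      proof (rule ccontr)
        assume "\<not> k \<ge> 0"
        then have "- y \<in> \<sigma>" using k coneof_scale[of v S0 "-k"] coneof_base[OF fin v(1)] sig by simp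
        then have "y = 0" using point yS by blast
        then show False using k nz[OF v(1)] \<open>\<not> k \<ge> 0\<close> by simp
      qed
      then show "y \<in> ray v" using k unfolding ray_def by auto
    qed
  qed
  then show ?thesis using v by blast
qed

end

theorem theorem3p5:
  fixes m :: nat and idx :: "'n::finite \<Rightarrow> nat" and \<sigma> :: "(real ^ 'n) set"
  assumes "m \<ge> 2"
    and "bij_betw idx UNIV {0..m}"
    and "polyhedral_cone \<sigma>"
    and "span \<sigma> = UNIV"
    and "pointed_cone \<sigma>"
    and "\<forall>R. extremal_ray \<sigma> R \<longrightarrow>
           (\<exists>p q. (p, q) \<noteq> (0, 0) \<and> R \<subseteq> veronese_line idx m p q)"
  shows "\<forall>F. facet \<sigma> F \<longrightarrow>
           (\<exists>V. finite V \<and> card V = m \<and> independent V \<and>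
                {R. extremal_ray \<sigma> R \<and> R \<subseteq> F} = ray ` V)"
proof -
  obtain S where Sfin: "finite S" and Ssig: "\<sigma> = coneof S"
    using assms(3) unfolding polyhedral_cone_def coneof_def by blast
  define n where "n = (LEAST n. \<exists>T. finite T \<and> card T = n \<and> coneof T = \<sigma>)"
  have "\<exists>T. finite T \<and> card T = n \<and> coneof T = \<sigma>"
    unfolding n_def by (rule LeastI_ex) (use Sfin Ssig in auto)
  then obtain S0 where S0: "finite S0" "card S0 = n" "coneof S0 = \<sigma>" by blast
  have minim: "v \<notin> coneof (S0 - {v})" if v: "v \<in> S0" for v
  proof
    assume "v \<in> coneof (S0 - {v})"
    then have "coneof (S0 - {v}) = \<sigma>" using coneof_remove S0 v by metis
    then have "n \<le> card (S0 - {v})" unfolding n_def by (intro Least_le) (use S0 in auto)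
    then show False using S0 v card_Diff1_less by fastforce
  qed
  have point: "x = 0" if xs: "x \<in> \<sigma>" "- x \<in> \<sigma>" for x
  proof -
    have "span {x} \<subseteq> \<sigma>"
    proof
      fix y assume "y \<in> span {x}"
      then obtain k where k: "y = k *\<^sub>R x" by (auto simp: span_singleton)
      show "y \<in> \<sigma>"
      proof (cases "k \<ge> 0")
        case True then show ?thesis using coneof_scale[of x S0 k] xs S0(3) k by auto
      next
        case False
        then have "(-k) *\<^sub>R (-x) \<in> \<sigma>" using coneof_scale[of "-x" S0 "-k"] xs S0(3) by auto
        then show ?thesis using k by simp
      qed
    qed
    then have "span {x} = {0}" using assms(5) unfolding pointed_cone_def by (metis subspace_span)
    then show ?thesis using span_base[of x "{x}"] by auto
  qed
  interpret M: mincone S0 \<sigma> using S0 minim point by unfold_locales auto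
  have idxle: "idx i \<le> m" for i using assms(2) unfolding bij_betw_def by auto
  have idxsurj: "\<exists>t. idx t = i" if "i \<le> m" for i
    using assms(2) that unfolding bij_betw_def by (metis UNIV_I atLeastAtMost_iff imageE zero_le)
  have vpc: "veronese_pt idx m p q $ i = p ^ (m - idx i) * q ^ (idx i)" for p q i
    by (simp add: veronese_pt_def)
  have "\<forall>v\<in>S0. \<exists>z. fst z \<noteq> (0,0) \<and> snd z \<noteq> 0 \<and>
          v = snd z *\<^sub>R veronese_pt idx m (fst (fst z)) (snd (fst z))"
  proof
    fix v assume v: "v \<in> S0"
    obtain p q where pq: "(p,q) \<noteq> (0,0)" "ray v \<subseteq> veronese_line idx m p q"
      using assms(6) M.ray_extremal[OF v] by blast
    then have "v \<in> span {veronese_pt idx m p q}" using M.ray_in unfolding veronese_line_def by blast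
    then obtain s where s: "v = s *\<^sub>R veronese_pt idx m p q" by (auto simp: span_singleton)
    have "s \<noteq> 0" using s M.nz[OF v] by auto
    then show "\<exists>z. fst z \<noteq> (0,0) \<and> snd z \<noteq> 0 \<and>
          v = snd z *\<^sub>R veronese_pt idx m (fst (fst z)) (snd (fst z))"
      using pq s by (intro exI[of _ "((p,q),s)"]) auto
  qed
  then obtain Z where Z: "\<forall>v\<in>S0. fst (Z v) \<noteq> (0,0) \<and> snd (Z v) \<noteq> 0 \<and>
          v = snd (Z v) *\<^sub>R veronese_pt idx m (fst (fst (Z v))) (snd (fst (Z v)))"
    by (metis (no_types) bchoice)
  define pt where "pt v = fst (Z v)" for v
  define sc where "sc v = snd (Z v)" for v
  have ptsc: "pt v \<noteq> (0,0)" "sc v \<noteq> 0" "v = sc v *\<^sub>R veronese_pt idx m (fst (pt v)) (snd (pt v))"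
    if "v \<in> S0" for v using Z that unfolding pt_def sc_def by auto
  have np: "fst (pt v) * snd (pt v') - snd (pt v) * fst (pt v') \<noteq> 0"
    if vv: "v \<in> S0" "v' \<in> S0" "v \<noteq> v'" for v v'
  proof
    assume h: "fst (pt v) * snd (pt v') - snd (pt v) * fst (pt v') = 0"
    obtain p q where P: "pt v = (p,q)" by (cases "pt v")
    obtain p' q' where P': "pt v' = (p',q')" by (cases "pt v'")
    have nz1: "(p,q) \<noteq> (0,0)" and nz2: "(p',q') \<noteq> (0,0)" using ptsc(1) vv P P' by metis+
    have h': "p * q' = q * p'" using h P P' by simp
    have "\<exists>l. l \<noteq> 0 \<and> p' = l * p \<and> q' = l * q"
    proof (cases "p = 0")
      case True
      then have "q \<noteq> 0" using nz1 by simp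
      then have "p' = 0" using h' True by simp
      then show ?thesis using True \<open>q \<noteq> 0\<close> nz2
        by (intro exI[of _ "q' / q"]) auto
    next
      case False
      have "q' = p' / p * q" using h' False by (simp add: field_simps)
      moreover have "p' \<noteq> 0" using h' False nz2 by auto
      ultimately show ?thesis using False by (intro exI[of _ "p' / p"]) auto
    qed
    then obtain l where l: "l \<noteq> 0" "p' = l * p" "q' = l * q" by blast
    have W: "veronese_pt idx m p' q' = l ^ m *\<^sub>R veronese_pt idx m p q"
    proof -
      have "(l * p) ^ (m - idx i) * (l * q) ^ idx i = l ^ m * (p ^ (m - idx i) * q ^ idx i)" for i
      proof -
        have "l ^ (m - idx i) * l ^ idx i = l ^ m" using idxle[of i] by (simp flip: power_add)
        then show ?thesis by (simp add: power_mult_distrib)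
      qed
      then show ?thesis by (simp add: vec_eq_iff vpc l)
    qed
    define \<mu> where "\<mu> = sc v' * l ^ m / sc v"
    have veq: "v' = \<mu> *\<^sub>R v"
    proof -
      have "v' = sc v' *\<^sub>R (l ^ m *\<^sub>R veronese_pt idx m p q)" using ptsc(3)[OF vv(2)] P' W by simp
      also have "\<dots> = \<mu> *\<^sub>R (sc v *\<^sub>R veronese_pt idx m p q)" using ptsc(2)[OF vv(1)] by (simp add: \<mu>_def)
      also have "sc v *\<^sub>R veronese_pt idx m p q = v" using ptsc(3)[OF vv(1)] P by simp
      finally show ?thesis .
    qed
    have "\<mu> \<noteq> 0" using ptsc(2)[OF vv(1)] ptsc(2)[OF vv(2)] l by (simp add: \<mu>_def)
    show False
    proof (cases "\<mu> > 0")
      case True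
      have "v \<in> coneof (S0 - {v'})" using vv S0(1) by (intro coneof_base) auto
      then have "\<mu> *\<^sub>R v \<in> coneof (S0 - {v'})" using coneof_scale[of v "S0 - {v'}" \<mu>] True by simp
      then have "v' \<in> coneof (S0 - {v'})" using veq by simp
      then show False using minim vv by blast
    next
      case False
      then have "(- \<mu>) *\<^sub>R v \<in> coneof S0" using coneof_scale[OF coneof_base[OF S0(1) vv(1)], of "- \<mu>"] by simp
      then have "(- \<mu>) *\<^sub>R v \<in> \<sigma>" using S0(3) by simp
      then have "- v' \<in> \<sigma>" using veq by simp
      moreover have "v' \<in> \<sigma>" using coneof_base[OF S0(1) vv(2)] S0(3) by auto
      ultimately have "v' = 0" using point by blast
      then show False using M.nz vv by blast
    qed
  qed
  have indep: "independent W" if W: "W \<subseteq> S0" "card W \<le> Suc m" for W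
  proof -
    have fW: "finite W" using W S0(1) finite_subset by blast
    have inj: "inj_on pt W"
    proof (rule inj_onI)
      fix v v' assume "v \<in> W" "v' \<in> W" "pt v = pt v'"
      then show "v = v'" using np[of v v'] W by (auto simp: mult.commute)
    qed
    have "\<forall>v\<in>W. u v = 0" if u: "(\<Sum>v\<in>W. u v *\<^sub>R v) = 0" for u
    proof -
      define c where "c x = u (inv_into W pt x) * sc (inv_into W pt x)" for x
      have cpt: "c (pt v) = u v * sc v" if "v \<in> W" for v using inv_into_f_f[OF inj that] by (simp add: c_def)
      have "\<forall>x\<in>pt ` W. c x = 0"
      proof (rule key_points)
        show "finite (pt ` W)" using fW by simp
        show "card (pt ` W) \<le> Suc m" using card_image[OF inj] W by simp
        show "\<forall>x\<in>pt ` W. x \<noteq> (0, 0)" using ptsc(1) W by auto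
        show "\<forall>x\<in>pt ` W. \<forall>y\<in>pt ` W. x \<noteq> y \<longrightarrow> fst x * snd y - snd x * fst y \<noteq> 0"
          using np W by auto
        show "\<forall>i\<le>m. (\<Sum>x\<in>pt ` W. c x * fst x ^ (m - i) * snd x ^ i) = 0"
        proof (intro allI impI)
          fix i assume "i \<le> m"
          then obtain t where t: "idx t = i" using idxsurj by blast
          have "(\<Sum>x\<in>pt ` W. c x * fst x ^ (m - i) * snd x ^ i)
              = (\<Sum>v\<in>W. c (pt v) * fst (pt v) ^ (m - i) * snd (pt v) ^ i)"
            by (simp add: sum.reindex[OF inj])
          also have "\<dots> = (\<Sum>v\<in>W. u v * v $ t)"
          proof (rule sum.cong[OF refl])
            fix v assume v: "v \<in> W"
            have vW: "v \<in> S0" using v W by blast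
            have "v $ t = (sc v *\<^sub>R veronese_pt idx m (fst (pt v)) (snd (pt v))) $ t"
              using arg_cong[OF ptsc(3)[OF vW], of "\<lambda>w. w $ t"] .
            then have "v $ t = sc v * (fst (pt v) ^ (m - i) * snd (pt v) ^ i)"
              by (simp add: vpc t)
            then show "c (pt v) * fst (pt v) ^ (m - i) * snd (pt v) ^ i = u v * v $ t"
              using cpt[OF v] by simp
          qed
          also have "\<dots> = (\<Sum>v\<in>W. u v *\<^sub>R v) $ t" by simp
          also have "\<dots> = 0" using u by simp
          finally show "(\<Sum>x\<in>pt ` W. c x * fst x ^ (m - i) * snd x ^ i) = 0" .
        qed
      qed
      then show ?thesis using cpt ptsc(2) W by auto
    qed
    then show ?thesis using dependent_finite[OF fW] by auto
  qed
  have card_n: "CARD('n) = Suc m" using bij_betw_same_card[OF assms(2)] by simp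
  have s0: "0 \<in> \<sigma>" using coneof_0 S0(3) by blast
  have "0 \<in> affine hull \<sigma>" by (rule hull_inc) (rule s0)
  then have "aff_dim \<sigma> = int (dim \<sigma>)" using aff_dim_eq_dim[of 0 \<sigma>] by simp
  also have "dim \<sigma> = dim (span \<sigma>)" by simp
  also have "\<dots> = Suc m" using assms(4) card_n by simp
  finally have adS: "aff_dim \<sigma> = int (Suc m)" .
  show ?thesis
  proof (intro allI impI)
    fix F assume "facet \<sigma> F"
    then have F: "F face_of \<sigma>" and adF: "aff_dim F = int m" unfolding facet_def using adS by auto
    have "F \<noteq> {}" using adF by auto
    then have F0: "0 \<in> F" using M.face_zero[OF F] by blast
    have "0 \<in> affine hull F" by (rule hull_inc) (rule F0)
    then have dF: "dim F = m" using aff_dim_eq_dim[of 0 F] adF by simp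
    define V where "V = S0 \<inter> F"
    have fV: "finite V" using S0(1) by (simp add: V_def)
    have "F \<subseteq> span V" using M.face_gen[OF F] coneof_span unfolding V_def by blast
    then have "span F \<subseteq> span V" by (metis span_mono span_span)
    moreover have "span V \<subseteq> span F" by (rule span_mono) (auto simp: V_def)
    ultimately have "span V = span F" by blast
    then have "dim (span V) = dim (span F)" by simp
    then have dV: "dim V = m" using dF by simp
    have cle: "card V \<le> m"
    proof (rule ccontr)
      assume "\<not> card V \<le> m"
      then obtain V' where V': "V' \<subseteq> V" "card V' = Suc m"
        using obtain_subset_with_card_n[of "Suc m" V] by (metis not_less_eq_eq)
      then have "independent V'" using indep V_def by auto
      then have "card V' \<le> dim V" using V' by (intro independent_card_le_dim) auto
      then show False using V' dV by simp
    qed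
    have iV: "independent V" using indep[of V] cle by (simp add: V_def)
    have cV: "card V = m" using dim_eq_card_independent[OF iV] dV by simp
    have "{R. extremal_ray \<sigma> R \<and> R \<subseteq> F} = ray ` V"
    proof
      show "{R. extremal_ray \<sigma> R \<and> R \<subseteq> F} \<subseteq> ray ` V"
      proof
        fix R assume "R \<in> {R. extremal_ray \<sigma> R \<and> R \<subseteq> F}"
        then have R: "extremal_ray \<sigma> R" "R \<subseteq> F" by auto
        obtain v where v: "v \<in> S0" "R = ray v" using M.extremal_is_ray[OF R(1)] by blast
        have "v \<in> V" using v R(2) M.ray_in unfolding V_def by blast
        then show "R \<in> ray ` V" using v by blast
      qed
      show "ray ` V \<subseteq> {R. extremal_ray \<sigma> R \<and> R \<subseteq> F}"
      proof
        fix R assume "R \<in> ray ` V"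
        then obtain v where v: "v \<in> V" "R = ray v" by blast
        have "extremal_ray \<sigma> R" using v M.ray_extremal unfolding V_def by blast
        moreover have "R \<subseteq> F" using v M.face_scale[OF F] unfolding V_def ray_def by auto
        ultimately show "R \<in> {R. extremal_ray \<sigma> R \<and> R \<subseteq> F}" by blast
      qed
    qed
    then show "\<exists>V. finite V \<and> card V = m \<and> independent V \<and>
                {R. extremal_ray \<sigma> R \<and> R \<subseteq> F} = ray ` V"
      using fV cV iV by blast
  qed
qed

end
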